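(* Let $G$ be a graph with $V(G)=\{u_1,\ldots,u_n\}$ such that $\{u_1,\ldots,u_\ell\}$ induces a clique in $G$ and $\ell<n$. If $H_1,\ldots,H_\ell$ are pairwise disjoint complete graphs and $H_{\ell+1},\ldots,H_n$ are pairwise disjoint graphs (all $H_1,\ldots,H_n$ pairwise disjoint), then $box(G[H_1,H_2,\ldots,H_n])\leq \sum_{i=\ell+1}^{n} box(H_i)$.
   Context: All graphs are simple, finite and undirected. For a graph $G$ with vertex set $\{u_1,\ldots,u_n\}$ and pairwise disjoint graphs $H_1,\ldots,H_n$, the $G$-generalized join $G[H_1,\ldots,H_n]$ is the graph obtained from $G$ by replacing each vertex $u_i$ by $H_i$ and joining every vertex of $H_i$ to every vertex of $H_j$ whenever $u_i$ is adjacent to $u_j$ in $G$. The boxicity $box(G)$ is the least positive integer $\ell$ such that $G$ is isomorphic to the intersection graph of a family of $\ell$-boxes (Cartesian products of $\ell$ closed bounded real intervals). *)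

theory Defs
  imports Main "HOL.Real"
begin

type_synonym 'a graph = "'a set \<times> ('a \<Rightarrow> 'a \<Rightarrow> bool)"

definition verts :: "'a graph \<Rightarrow> 'a set" where "verts G = fst G"
definition adj :: "'a graph \<Rightarrow> 'a \<Rightarrow> 'a \<Rightarrow> bool" where "adj G = snd G"

definition is_graph :: "'a graph \<Rightarrow> bool" where
  "is_graph G \<longleftrightarrow> finite (verts G)
     \<and> (\<forall>x y. adj G x y \<longrightarrow> x \<in> verts G \<and> y \<in> verts G)
     \<and> (\<forall>x y. adj G x y \<longrightarrow> adj G y x)
     \<and> (\<forall>x. \<not> adj G x x)"

definition is_complete :: "'a graph \<Rightarrow> bool" where
  "is_complete G \<longleftrightarrow> (\<forall>x\<in>verts G. \<forall>y\<in>verts G. x \<noteq> y \<longrightarrow> adj G x y)"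

text \<open>The k-box with lower corner lo and upper corner hi, as a subset of R^k
  (points represented as functions nat to real vanishing at coordinates \<ge> k).\<close>
definition kbox :: "nat \<Rightarrow> (nat \<Rightarrow> real) \<Rightarrow> (nat \<Rightarrow> real) \<Rightarrow> (nat \<Rightarrow> real) set" where
  "kbox k lo hi = {x. (\<forall>i<k. lo i \<le> x i \<and> x i \<le> hi i) \<and> (\<forall>i\<ge>k. x i = 0)}"

definition box_rep :: "nat \<Rightarrow> 'a graph \<Rightarrow> ('a \<Rightarrow> (nat \<Rightarrow> real) \<times> (nat \<Rightarrow> real)) \<Rightarrow> bool" where
  "box_rep k G f \<longleftrightarrow>
     (\<forall>v\<in>verts G. \<forall>i<k. fst (f v) i \<le> snd (f v) i)
     \<and> (\<forall>u\<in>verts G. \<forall>v\<in>verts G. u \<noteq> v \<longrightarrow>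
          (adj G u v \<longleftrightarrow> kbox k (fst (f u)) (snd (f u)) \<inter> kbox k (fst (f v)) (snd (f v)) \<noteq> {}))"

definition boxicity :: "'a graph \<Rightarrow> nat" where
  "boxicity G = (LEAST k. 0 < k \<and> (\<exists>f. box_rep k G f))"

text \<open>Generalized join G[H_1,...,H_n], where u : {1..n} \<rightarrow> V(G) enumerates V(G).\<close>
definition gen_join :: "'b graph \<Rightarrow> nat \<Rightarrow> (nat \<Rightarrow> 'b) \<Rightarrow> (nat \<Rightarrow> 'a graph) \<Rightarrow> 'a graph" where
  "gen_join G n u H =
     ((\<Union>i\<in>{1..n}. verts (H i)),
      (\<lambda>x y. (\<exists>i\<in>{1..n}. x \<in> verts (H i) \<and> y \<in> verts (H i) \<and> adj (H i) x y)
           \<or> (\<exists>i\<in>{1..n}. \<exists>j\<in>{1..n}. i \<noteq> j \<and> x \<in> verts (H i) \<and> y \<in> verts (H j)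
                 \<and> adj G (u i) (u j))))"

end

theory Submission
  imports Defs Complex_Main
begin

definition brep :: "nat \<Rightarrow> 'a set \<Rightarrow> ('a \<Rightarrow> 'a \<Rightarrow> bool) \<Rightarrow> ('a \<Rightarrow> (nat \<Rightarrow> real) \<times> (nat \<Rightarrow> real)) \<Rightarrow> bool" where
  "brep k V A f \<longleftrightarrow> (\<forall>v\<in>V. \<forall>c<k. fst (f v) c \<le> snd (f v) c) \<and>
     (\<forall>x\<in>V. \<forall>y\<in>V. x \<noteq> y \<longrightarrow> (A x y \<longleftrightarrow> (\<forall>c<k. fst (f x) c \<le> snd (f y) c \<and> fst (f y) c \<le> snd (f x) c)))"

lemma kbox_inter:
  "(kbox k lo1 hi1 \<inter> kbox k lo2 hi2 \<noteq> {}) \<longleftrightarrow> (\<forall>c<k. max (lo1 c) (lo2 c) \<le> min (hi1 c) (hi2 c))"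
proof
  assume "kbox k lo1 hi1 \<inter> kbox k lo2 hi2 \<noteq> {}"
  then obtain x where "x \<in> kbox k lo1 hi1" "x \<in> kbox k lo2 hi2" by blast
  then show "\<forall>c<k. max (lo1 c) (lo2 c) \<le> min (hi1 c) (hi2 c)"
    unfolding kbox_def by force
next
  assume H: "\<forall>c<k. max (lo1 c) (lo2 c) \<le> min (hi1 c) (hi2 c)"
  define x where "x = (\<lambda>c. if c < k then max (lo1 c) (lo2 c) else 0)"
  have "x \<in> kbox k lo1 hi1 \<inter> kbox k lo2 hi2"
    using H unfolding kbox_def x_def by auto
  then show "kbox k lo1 hi1 \<inter> kbox k lo2 hi2 \<noteq> {}" by blast
qed

lemma box_rep_brep: "box_rep k G f \<longleftrightarrow> brep k (verts G) (adj G) f"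
proof -
  have e: "(\<forall>c<k. max (lo1 c) (lo2 c) \<le> min (hi1 c) (hi2 c)) \<longleftrightarrow>
      (\<forall>c<k. lo1 c \<le> hi2 c \<and> lo2 c \<le> hi1 c)"
    if "\<forall>c<k. lo1 c \<le> hi1 c" "\<forall>c<k. lo2 c \<le> hi2 c" for lo1 lo2 hi1 hi2 :: "nat \<Rightarrow> real"
    using that by auto
  show ?thesis
    unfolding box_rep_def brep_def kbox_inter
    using e by blast
qed

lemma all_less_add: "(\<forall>c<(k1::nat)+k2. P c) \<longleftrightarrow> (\<forall>c<k1. P c) \<and> (\<forall>c<k2. P (k1+c))"
proof
  assume h: "\<forall>c<k1+k2. P c" then show "(\<forall>c<k1. P c) \<and> (\<forall>c<k2. P (k1+c))"
  proof (intro conjI allI impI)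
    fix c assume "c < k1" then have "c < k1 + k2" by simp
    then show "P c" using h by blast
  next
    fix c assume "c < k2" then have "k1 + c < k1 + k2" by simp
    then show "P (k1 + c)" using h by blast
  qed
next
  assume a: "(\<forall>c<k1. P c) \<and> (\<forall>c<k2. P (k1+c))"
  show "\<forall>c<k1+k2. P c"
  proof (intro allI impI)
    fix c assume c: "c < k1 + k2"
    show "P c"
    proof (cases "c < k1")
      case True then show ?thesis using a by auto
    next
      case False
      then have "c = k1 + (c - k1)" "c - k1 < k2" using c by auto
      then show ?thesis using a by metis
    qed
  qed
qed

lemma brep_inter:
  assumes "brep k1 V A1 f1" "brep k2 V A2 f2"
  shows "brep (k1+k2) V (\<lambda>x y. A1 x y \<and> A2 x y)
     (\<lambda>v. (\<lambda>c. if c<k1 then fst (f1 v) c else fst (f2 v) (c-k1),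
           \<lambda>c. if c<k1 then snd (f1 v) c else snd (f2 v) (c-k1)))"
  using assms unfolding brep_def all_less_add by auto

lemma brep_family:
  assumes "finite S"
  shows "(\<forall>i\<in>S. brep (d i) V (A i) (g i)) \<Longrightarrow> \<exists>f. brep (\<Sum>i\<in>S. d i) V (\<lambda>x y. \<forall>i\<in>S. A i x y) f"
  using assms
proof (induction S rule: finite_induct)
  case empty
  have "brep 0 V (\<lambda>x y. True) (\<lambda>v. (\<lambda>_. 0, \<lambda>_. 0))" unfolding brep_def by auto
  then show ?case by auto
next
  case (insert i S)
  then obtain f where f: "brep (\<Sum>i\<in>S. d i) V (\<lambda>x y. \<forall>i\<in>S. A i x y) f" by auto
  have "brep (d i) V (A i) (g i)" using insert by auto
  from brep_inter[OF this f] show ?case using insert by auto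
qed

lemma brep_transfer:
  assumes "brep k V A f" "\<forall>x\<in>V. \<forall>y\<in>V. x \<noteq> y \<longrightarrow> (B x y \<longleftrightarrow> A x y)"
  shows "brep k V B f"
  using assms unfolding brep_def by auto

lemma brep_exists:
  assumes "is_graph G"
  shows "\<exists>k>0. \<exists>f. box_rep k G f"
proof -
  let ?V = "verts G"
  have fin: "finite ?V" using assms unfolding is_graph_def by auto
  have sym: "\<And>x y. adj G x y \<Longrightarrow> adj G y x" using assms unfolding is_graph_def by auto
  define A where "A = (\<lambda>a x y. if x = a then adj G a y else if y = a then adj G a x else True)"
  define g where "g = (\<lambda>a v. if v = a then ((\<lambda>_::nat. 0::real), (\<lambda>_::nat. 0::real))
      else if adj G a v then (\<lambda>_. 0, \<lambda>_. 1) else (\<lambda>_. 1, \<lambda>_. 1))"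
  have "\<forall>a\<in>?V. brep 1 ?V (A a) (g a)"
    unfolding brep_def A_def g_def by auto
  from brep_family[OF fin this] obtain f where
    f: "brep (\<Sum>a\<in>?V. 1) ?V (\<lambda>x y. \<forall>a\<in>?V. A a x y) f" by blast
  have f2: "brep (card ?V) ?V (adj G) f"
    by (rule brep_transfer[OF f[simplified]]) (auto simp: A_def dest: sym)
  have c1: "brep 1 ?V (\<lambda>x y. True) (\<lambda>v. (\<lambda>_. 0, \<lambda>_. 0))" unfolding brep_def by auto
  from brep_inter[OF f2 c1] obtain h where "brep (card ?V + 1) ?V (adj G) h" by auto
  then show ?thesis unfolding box_rep_brep by auto
qed


lemma arctan_lt2: "arctan t < 2" "-2 < arctan t"
  using arctan_bounded[of t] pi_less_4 by linarith+

lemma block_rep: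
  assumes br: "box_rep b Hi fi" and bpos: "0 < b"
  shows "brep b V (\<lambda>x y. if x \<in> verts Hi \<and> y \<in> verts Hi then adj Hi x y
        else if x \<in> verts Hi then N y else if y \<in> verts Hi then N x else True)
     (\<lambda>x. if x \<in> verts Hi then (\<lambda>c. arctan (fst (fi x) c), \<lambda>c. arctan (snd (fi x) c))
        else if N x then (\<lambda>_. -2, \<lambda>_. 2) else (\<lambda>_. 2, \<lambda>_. 2))"
proof -
  have br': "brep b (verts Hi) (adj Hi) fi" using br box_rep_brep by blast
  have ex0: "\<not> (\<forall>c<b. P c)" if "\<And>c. \<not> P c" for P using bpos that by blast
  show ?thesis
    unfolding brep_def
  proof (intro conjI ballI impI allI)
    fix v c assume "v \<in> V" "c < b"
    then show "fst (if v \<in> verts Hi then (\<lambda>c. arctan (fst (fi v) c), \<lambda>c. arctan (snd (fi v) c))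
        else if N v then (\<lambda>_. -2, \<lambda>_. 2) else (\<lambda>_. 2, \<lambda>_. 2)) c
       \<le> snd (if v \<in> verts Hi then (\<lambda>c. arctan (fst (fi v) c), \<lambda>c. arctan (snd (fi v) c))
        else if N v then (\<lambda>_. -2, \<lambda>_. 2) else (\<lambda>_. 2, \<lambda>_. 2)) c"
      using br' unfolding brep_def by (auto simp: arctan_le_iff)
  next
    fix x y assume "x \<in> V" "y \<in> V" "x \<noteq> y"
    show "(if x \<in> verts Hi \<and> y \<in> verts Hi then adj Hi x y
        else if x \<in> verts Hi then N y else if y \<in> verts Hi then N x else True) =
       (\<forall>c<b. fst (if x \<in> verts Hi then (\<lambda>c. arctan (fst (fi x) c), \<lambda>c. arctan (snd (fi x) c))
        else if N x then (\<lambda>_. -2, \<lambda>_. 2) else (\<lambda>_. 2, \<lambda>_. 2)) c \<le>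
           snd (if y \<in> verts Hi then (\<lambda>c. arctan (fst (fi y) c), \<lambda>c. arctan (snd (fi y) c))
        else if N y then (\<lambda>_. -2, \<lambda>_. 2) else (\<lambda>_. 2, \<lambda>_. 2)) c \<and>
           fst (if y \<in> verts Hi then (\<lambda>c. arctan (fst (fi y) c), \<lambda>c. arctan (snd (fi y) c))
        else if N y then (\<lambda>_. -2, \<lambda>_. 2) else (\<lambda>_. 2, \<lambda>_. 2)) c \<le>
           snd (if x \<in> verts Hi then (\<lambda>c. arctan (fst (fi x) c), \<lambda>c. arctan (snd (fi x) c))
        else if N x then (\<lambda>_. -2, \<lambda>_. 2) else (\<lambda>_. 2, \<lambda>_. 2)) c)"
      using br' \<open>x \<noteq> y\<close> bpos unfolding brep_def
      by (auto simp: arctan_le_iff arctan_lt2 less_imp_le not_le)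
  qed
qed


theorem theorem3p4:
  fixes G :: "'b graph" and H :: "nat \<Rightarrow> 'a graph" and u :: "nat \<Rightarrow> 'b" and n l :: nat
  assumes "is_graph G"
    and "bij_betw u {1..n} (verts G)"
    and "1 \<le> l" and "l < n"
    and "\<forall>i\<in>{1..l}. \<forall>j\<in>{1..l}. i \<noteq> j \<longrightarrow> adj G (u i) (u j)"
    and "\<forall>i\<in>{1..n}. is_graph (H i)"
    and "\<forall>i\<in>{1..l}. is_complete (H i)"
    and "\<forall>i\<in>{1..n}. \<forall>j\<in>{1..n}. i \<noteq> j \<longrightarrow> verts (H i) \<inter> verts (H j) = {}"
  shows "boxicity (gen_join G n u H) \<le> (\<Sum>i=l+1..n. boxicity (H i))"
proof -
  note A = assms
  define J where "J = gen_join G n u H"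
  define VJ where "VJ = (\<Union>i\<in>{1..n}. verts (H i))"
  have vJ: "verts J = VJ" unfolding J_def VJ_def gen_join_def verts_def by simp
  define idx where "idx x = (THE j. j \<in> {1..n} \<and> x \<in> verts (H j))" for x
  have idx: "idx x = j" if "j \<in> {1..n}" "x \<in> verts (H j)" for x j
    unfolding idx_def
  proof (rule the_equality)
    show "j \<in> {1..n} \<and> x \<in> verts (H j)" using that by auto
    fix k assume "k \<in> {1..n} \<and> x \<in> verts (H k)"
    then show "k = j" using A(8) that by blast
  qed
  have idxV: "idx x \<in> {1..n} \<and> x \<in> verts (H (idx x))" if "x \<in> VJ" for x
    using that idx unfolding VJ_def by auto
  have symG: "adj G a c \<Longrightarrow> adj G c a" for a c using A(1) unfolding is_graph_def by auto
  have adjJ: "adj J x y \<longleftrightarrow> (idx x = idx y \<and> adj (H (idx x)) x y) \<or>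
      (idx x \<noteq> idx y \<and> adj G (u (idx x)) (u (idx y)))" (is "_ \<longleftrightarrow> ?R") if "x \<in> VJ" "y \<in> VJ" for x y
  proof -
    have "adj J x y \<longleftrightarrow> (\<exists>i\<in>{1..n}. x \<in> verts (H i) \<and> y \<in> verts (H i) \<and> adj (H i) x y)
           \<or> (\<exists>i\<in>{1..n}. \<exists>j\<in>{1..n}. i \<noteq> j \<and> x \<in> verts (H i) \<and> y \<in> verts (H j)
                 \<and> adj G (u i) (u j))"
      unfolding J_def gen_join_def adj_def by simp
    also have "\<dots> \<longleftrightarrow> ?R"
    proof
      assume "(\<exists>i\<in>{1..n}. x \<in> verts (H i) \<and> y \<in> verts (H i) \<and> adj (H i) x y)
           \<or> (\<exists>i\<in>{1..n}. \<exists>j\<in>{1..n}. i \<noteq> j \<and> x \<in> verts (H i) \<and> y \<in> verts (H j)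
                 \<and> adj G (u i) (u j))"
      then show ?R
      proof
        assume "\<exists>i\<in>{1..n}. x \<in> verts (H i) \<and> y \<in> verts (H i) \<and> adj (H i) x y"
        then obtain i where "i \<in> {1..n}" "x \<in> verts (H i)" "y \<in> verts (H i)" "adj (H i) x y" by blast
        then have "idx x = i" "idx y = i" using idx by blast+
        then show ?R using \<open>adj (H i) x y\<close> by simp
      next
        assume "\<exists>i\<in>{1..n}. \<exists>j\<in>{1..n}. i \<noteq> j \<and> x \<in> verts (H i) \<and> y \<in> verts (H j)
                 \<and> adj G (u i) (u j)"
        then obtain i j where "i \<in> {1..n}" "j \<in> {1..n}" "i \<noteq> j" "x \<in> verts (H i)" "y \<in> verts (H j)"
           "adj G (u i) (u j)" by blast
        then have "idx x = i" "idx y = j" using idx by blast+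
        then show ?R using \<open>adj G (u i) (u j)\<close> \<open>i \<noteq> j\<close> by simp
      qed
    next
      assume r: ?R
      have ix: "idx x \<in> {1..n}" "x \<in> verts (H (idx x))" using idxV[OF that(1)] by auto
      have iy: "idx y \<in> {1..n}" "y \<in> verts (H (idx y))" using idxV[OF that(2)] by auto
      show "(\<exists>i\<in>{1..n}. x \<in> verts (H i) \<and> y \<in> verts (H i) \<and> adj (H i) x y)
           \<or> (\<exists>i\<in>{1..n}. \<exists>j\<in>{1..n}. i \<noteq> j \<and> x \<in> verts (H i) \<and> y \<in> verts (H j)
                 \<and> adj G (u i) (u j))"
      proof (cases "idx x = idx y")
        case True
        then show ?thesis using r ix iy by metis
      next
        case False
        then show ?thesis using r ix iy by blast
      qed
    qed
    finally show ?thesis .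
  qed
  define b where "b i = boxicity (H i)" for i
  have bex: "0 < b i \<and> (\<exists>f. box_rep (b i) (H i) f)" if "i \<in> {1..n}" for i
  proof -
    from brep_exists[of "H i"] A(6) that have "\<exists>k. 0 < k \<and> (\<exists>f. box_rep k (H i) f)" by auto
    from LeastI_ex[OF this] show ?thesis unfolding b_def boxicity_def .
  qed
  then obtain fh where fh: "\<forall>i\<in>{1..n}. 0 < b i \<and> box_rep (b i) (H i) (fh i)" by metis
  define N where "N i x = adj G (u i) (u (idx x))" for i x
  define B where "B i = (\<lambda>x y. if x \<in> verts (H i) \<and> y \<in> verts (H i) then adj (H i) x y
        else if x \<in> verts (H i) then N i y else if y \<in> verts (H i) then N i x else True)" for i
  define F where "F i = (\<lambda>x. if x \<in> verts (H i) then (\<lambda>c. arctan (fst (fh i x) c), \<lambda>c. arctan (snd (fh i x) c))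
        else if N i x then (\<lambda>_. -2, \<lambda>_. 2) else (\<lambda>_. 2::real, \<lambda>_. 2::real))" for i
  have blocks: "\<forall>i\<in>{l+1..n}. brep (b i) VJ (B i) (F i)"
  proof
    fix i assume "i \<in> {l+1..n}"
    then have "i \<in> {1..n}" using A(3) by auto
    with fh have "box_rep (b i) (H i) (fh i)" "0 < b i" by auto
    from block_rep[OF this, of VJ "N i"] show "brep (b i) VJ (B i) (F i)"
      unfolding B_def F_def .
  qed
  from brep_family[OF _ blocks] obtain f where
    f: "brep (\<Sum>i=l+1..n. b i) VJ (\<lambda>x y. \<forall>i\<in>{l+1..n}. B i x y) f" by auto
  have key: "adj J x y \<longleftrightarrow> (\<forall>i\<in>{l+1..n}. B i x y)" if xy: "x \<in> VJ" "y \<in> VJ" "x \<noteq> y" for x y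
  proof -
    obtain p q where p: "idx x = p" "p \<in> {1..n}" "x \<in> verts (H p)"
      and q: "idx y = q" "q \<in> {1..n}" "y \<in> verts (H q)" using idxV xy by blast
    have notin: "x \<notin> verts (H i)" if "i \<in> {1..n}" "i \<noteq> p" for i
      using A(8) p that by blast
    have notin2: "y \<notin> verts (H i)" if "i \<in> {1..n}" "i \<noteq> q" for i
      using A(8) q that by blast
    have Bo: "B i x y" if "i \<in> {1..n}" "i \<noteq> p" "i \<noteq> q" for i
      using notin[OF that(1,2)] notin2[OF that(1,3)] unfolding B_def by simp
    show ?thesis
    proof (cases "p = q")
      case True
      have lhs: "adj J x y \<longleftrightarrow> adj (H p) x y" using adjJ[OF xy(1,2)] p q True by auto
      show ?thesis
      proof (cases "p \<le> l")
        case True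
        then have "adj (H p) x y" using A(7) p q \<open>p = q\<close> xy(3) unfolding is_complete_def by auto
        moreover have "\<forall>i\<in>{l+1..n}. B i x y" using Bo True \<open>p = q\<close> A(3) by auto
        ultimately show ?thesis using lhs by auto
      next
        case False
        then have pin: "p \<in> {l+1..n}" using p by auto
        have "B p x y = adj (H p) x y" using p q \<open>p = q\<close> unfolding B_def by simp
        then show ?thesis using lhs Bo pin \<open>p = q\<close> A(3) by (metis atLeastAtMost_iff le_trans le_add2)
      qed
    next
      case False
      have lhs: "adj J x y \<longleftrightarrow> adj G (u p) (u q)" using adjJ[OF xy(1,2)] p q False by auto
      have Bp: "B p x y = adj G (u p) (u q)"
        using p q False notin2[OF p(2)] unfolding B_def N_def by auto
      have Bq: "B q x y = adj G (u p) (u q)"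
        using p q False notin[OF q(2)] symG unfolding B_def N_def by auto
      show ?thesis
      proof (cases "p \<le> l \<and> q \<le> l")
        case True
        then have "adj G (u p) (u q)" using A(5) p q False by auto
        moreover have "\<forall>i\<in>{l+1..n}. B i x y" using Bo True A(3) by auto
        ultimately show ?thesis using lhs by auto
      next
        case c2: False
        have "(\<forall>i\<in>{l+1..n}. B i x y) \<longleftrightarrow> adj G (u p) (u q)"
        proof
          assume "\<forall>i\<in>{l+1..n}. B i x y"
          then show "adj G (u p) (u q)" using c2 Bp Bq p q by force
        next
          assume a: "adj G (u p) (u q)"
          show "\<forall>i\<in>{l+1..n}. B i x y"
          proof
            fix i assume i: "i \<in> {l+1..n}"
            then have "i \<in> {1..n}" using A(3) by auto
            then show "B i x y" using Bo Bp Bq a by metis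
          qed
        qed
        then show ?thesis using lhs by auto
      qed
    qed
  qed
  have "brep (\<Sum>i=l+1..n. b i) VJ (adj J) f"
    by (rule brep_transfer[OF f]) (use key in auto)
  then have rep: "box_rep (\<Sum>i=l+1..n. b i) J f" unfolding box_rep_brep vJ .
  have "0 < b n" using fh A(3,4) by auto
  moreover have "b n \<le> (\<Sum>i=l+1..n. b i)"
    by (rule member_le_sum) (use A(4) in auto)
  ultimately have pos: "0 < (\<Sum>i=l+1..n. b i)" by linarith
  have "boxicity J \<le> (\<Sum>i=l+1..n. b i)"
    unfolding boxicity_def by (rule Least_le) (use pos rep in auto)
  then show ?thesis unfolding J_def b_def .
qed

end
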